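(* Let $n\ge 1$ be an integer, $\kappa\in\mathbb{R}$, $T>0$ and $0<|\phi|<1/2$ satisfy $$\coth\big((\tfrac12-\phi)T\big)=\kappa-\coth\big((\tfrac12+\phi)T\big),$$ and set $\tau=nT$. Define $$\gamma_1=\frac{\coth^2(\tau-(n-\tfrac12+\phi)T)-1}{[\kappa-\coth(\tau-(n-\tfrac12+\phi)T)]^2-1},\qquad \gamma_2=\frac{\coth^2(\tau-(n-\tfrac12-\phi)T)-1}{[\kappa-\coth(\tau-(n-\tfrac12-\phi)T)]^2-1}.$$ Then $\gamma_1\gamma_2=1$, $\beta:=\gamma_1+\gamma_2>2$, and $\widehat D_a(\lambda)=\lambda^{2n-1}(\lambda-\gamma_1)(\lambda-\gamma_2)-(1-\gamma_1)(1-\gamma_2)$ factors as $(\lambda-1)\widehat H_a(\lambda)$ with $$\widehat H_a(\lambda)=\lambda^{2n}+(1-\beta)\lambda^{2n-1}+(2-\beta)\sum_{i=0}^{2n-2}\lambda^i;$$ in particular $\widehat D_a$ has a real root strictly greater than $1$. *)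

theory Defs
  imports Complex_Main
begin

definition coth :: "real \<Rightarrow> real" where
  "coth x = cosh x / sinh x"

end

theory Submission
  imports Defs
begin

lemma coth_gt1: assumes "x > (0::real)" shows "coth x > 1"
proof -
  have s: "sinh x > 0" using assms by simp
  have "cosh x - sinh x = exp (-x)" by (simp add: cosh_def sinh_def field_simps)
  hence "cosh x > sinh x" by (metis diff_gt_0_iff_gt exp_gt_zero)
  thus ?thesis using s by (simp add: coth_def)
qed

lemma coth_inj: assumes "a > (0::real)" "b > 0" "coth a = coth b" shows "a = b"
proof -
  have sa: "sinh a > 0" and sb: "sinh b > 0" using assms by auto
  have "cosh a * sinh b = cosh b * sinh a" using assms(3) sa sb
    by (simp add: coth_def field_simps)
  hence "sinh (b - a) = 0" by (simp add: sinh_diff algebra_simps)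
  thus ?thesis by simp
qed

lemma geo: "(x::real) - 1 \<noteq> 0 \<or> True \<Longrightarrow> (x - 1) * (\<Sum>i<m. x^i) = x^m - 1"
  by (simp add: power_diff_1_eq)

lemma alg: fixes x y S b :: real assumes "(x-1)*S = y - 1"
  shows "(x-1)*(x*y + (1-b)*y + (2-b)*S) = y*(x*x - b*x + 1) - (2-b)"
proof -
  have "(x-1)*(x*y + (1-b)*y + (2-b)*S) = (x-1)*(x*y+(1-b)*y) + (2-b)*((x-1)*S)" by algebra
  also have "... = y*(x*x - b*x + 1) - (2-b)" unfolding assms by algebra
  finally show ?thesis .
qed

theorem mainTheorem12:
  fixes n :: nat and \<kappa> T \<phi> \<tau> \<gamma>\<^sub>1 \<gamma>\<^sub>2 \<beta> :: real
  assumes hn: "n \<ge> 1"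
    and hT: "T > 0"
    and h\<phi>: "0 < \<bar>\<phi>\<bar>" "\<bar>\<phi>\<bar> < 1/2"
    and heq: "coth ((1/2 - \<phi>) * T) = \<kappa> - coth ((1/2 + \<phi>) * T)"
    and h\<tau>: "\<tau> = real n * T"
    and h\<gamma>1: "\<gamma>\<^sub>1 = ((coth (\<tau> - (real n - 1/2 + \<phi>) * T))^2 - 1) /
                  ((\<kappa> - coth (\<tau> - (real n - 1/2 + \<phi>) * T))^2 - 1)"
    and h\<gamma>2: "\<gamma>\<^sub>2 = ((coth (\<tau> - (real n - 1/2 - \<phi>) * T))^2 - 1) /
                  ((\<kappa> - coth (\<tau> - (real n - 1/2 - \<phi>) * T))^2 - 1)"
    and h\<beta>: "\<beta> = \<gamma>\<^sub>1 + \<gamma>\<^sub>2"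
  shows "\<gamma>\<^sub>1 * \<gamma>\<^sub>2 = 1 \<and> \<beta> > 2 \<and>
    (\<forall>x::real. x^(2*n - 1) * (x - \<gamma>\<^sub>1) * (x - \<gamma>\<^sub>2) - (1 - \<gamma>\<^sub>1) * (1 - \<gamma>\<^sub>2)
       = (x - 1) * (x^(2*n) + (1 - \<beta>) * x^(2*n - 1) + (2 - \<beta>) * (\<Sum>i=0..2*n-2. x^i))) \<and>
    (\<exists>x::real. x > 1 \<and> x^(2*n - 1) * (x - \<gamma>\<^sub>1) * (x - \<gamma>\<^sub>2) - (1 - \<gamma>\<^sub>1) * (1 - \<gamma>\<^sub>2) = 0)"
proof -
  define a where "a = (1/2 - \<phi>) * T"
  define b where "b = (1/2 + \<phi>) * T"
  define A where "A = coth a"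
  define B where "B = coth b"
  have a0: "a > 0" using hT h\<phi> by (simp add: a_def)
  have b0: "b > 0" using hT h\<phi> by (simp add: b_def)
  have ab: "a \<noteq> b" using hT h\<phi> by (auto simp: a_def b_def algebra_simps)
  have A1: "A > 1" using coth_gt1[OF a0] by (simp add: A_def)
  have B1: "B > 1" using coth_gt1[OF b0] by (simp add: B_def)
  have AB: "A \<noteq> B" using coth_inj[OF a0 b0] ab by (auto simp: A_def B_def)
  have k: "\<kappa> = A + B" using heq by (simp add: A_def B_def a_def b_def)
  have e1: "\<tau> - (real n - 1/2 + \<phi>) * T = a" using h\<tau> by (simp add: a_def algebra_simps)
  have e2: "\<tau> - (real n - 1/2 - \<phi>) * T = b" using h\<tau> by (simp add: b_def algebra_simps)
  define p where "p = A^2 - 1"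
  define q where "q = B^2 - 1"
  have p0: "p > 0" using A1 by (simp add: p_def)
  have q0: "q > 0" using B1 by (simp add: q_def)
  have pq: "p \<noteq> q"
  proof
    assume "p = q"
    hence "A^2 = B^2" by (simp add: p_def q_def)
    hence "A = B" using A1 B1 by (smt (verit) power2_eq_imp_eq)
    thus False using AB by simp
  qed
  have g1: "\<gamma>\<^sub>1 = p / q" using h\<gamma>1 e1 k by (simp add: p_def q_def A_def B_def)
  have g2: "\<gamma>\<^sub>2 = q / p" using h\<gamma>2 e2 k by (simp add: p_def q_def A_def B_def)
  have prod: "\<gamma>\<^sub>1 * \<gamma>\<^sub>2 = 1" using g1 g2 p0 q0 by simp
  have "(p - q)^2 > 0" using pq by simp
  hence "p*p + q*q > 2*p*q" by (simp add: power2_eq_square algebra_simps)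
  moreover have "\<beta> * (p*q) = p*p + q*q" using h\<beta> g1 g2 p0 q0 by (simp add: field_simps)
  ultimately have "(\<beta> - 2) * (p*q) > 0" by (simp add: algebra_simps)
  hence bet: "\<beta> > 2" using p0 q0 mult_pos_pos[OF p0 q0] by (auto simp: zero_less_mult_iff)
  define H where "H = (\<lambda>x::real. x^(2*n) + (1 - \<beta>) * x^(2*n - 1) + (2 - \<beta>) * (\<Sum>i=0..2*n-2. x^i))"
  define D where "D = (\<lambda>x::real. x^(2*n - 1) * (x - \<gamma>\<^sub>1) * (x - \<gamma>\<^sub>2) - (1 - \<gamma>\<^sub>1) * (1 - \<gamma>\<^sub>2))"
  have fact: "D x = (x - 1) * H x" for x
  proof -
    have s: "{0..2*n-2} = {..<2*n-1}" using hn by auto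
    define S where "S = (\<Sum>i=0..2*n-2. x^i)"
    define y where "y = x^(2*n-1)"
    have g: "(x - 1) * S = y - 1"
      unfolding S_def y_def s by (simp add: power_diff_1_eq)
    have e: "2*n = Suc (2*n-1)" using hn by simp
    have p1: "x^(2*n) = x * y" unfolding y_def by (subst e) simp
    have Hx: "H x = x*y + (1-\<beta>)*y + (2-\<beta>)*S" unfolding H_def p1 S_def y_def by simp
    have Dx: "D x = y * (x - \<gamma>\<^sub>1) * (x - \<gamma>\<^sub>2) - (1 - \<gamma>\<^sub>1) * (1 - \<gamma>\<^sub>2)"
      unfolding D_def y_def by simp
    show ?thesis unfolding Hx Dx using alg[OF g, of \<beta>] prod h\<beta> by algebra
  qed
  define g where "g = max \<gamma>\<^sub>1 \<gamma>\<^sub>2"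
  have gg: "g > 1"
  proof -
    have "\<gamma>\<^sub>1 > 0" "\<gamma>\<^sub>2 > 0" using g1 g2 p0 q0 by auto
    moreover have "\<gamma>\<^sub>1 \<noteq> 1" using prod bet h\<beta> by auto
    ultimately have pos: "\<gamma>\<^sub>1 > 0" and n1: "\<gamma>\<^sub>1 \<noteq> 1" by auto
    show ?thesis
    proof (cases "\<gamma>\<^sub>1 > 1")
      case True thus ?thesis by (simp add: g_def)
    next
      case False
      hence "\<gamma>\<^sub>1 < 1" using n1 by simp
      moreover have "\<gamma>\<^sub>2 = 1 / \<gamma>\<^sub>1" using prod pos by (simp add: field_simps)
      ultimately have "\<gamma>\<^sub>2 > 1" using pos by simp
      thus ?thesis by (simp add: g_def)
    qed
  qed
  have Dg: "D g = \<beta> - 2"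
  proof -
    have "g = \<gamma>\<^sub>1 \<or> g = \<gamma>\<^sub>2" by (auto simp: g_def max_def)
    hence "D g = 0 * g^(2*n-1) - (1 - \<gamma>\<^sub>1) * (1 - \<gamma>\<^sub>2)" unfolding D_def by auto
    thus ?thesis using prod h\<beta> by (simp add: algebra_simps)
  qed
  have Hg: "H g > 0"
  proof -
    have "(g - 1) * H g > 0" using fact[of g] Dg bet by simp
    thus ?thesis using gg by (simp add: zero_less_mult_iff)
  qed
  have H1: "H 1 < 0"
  proof -
    have c: "card {0..2*n-2} = 2*n-1" using hn by simp
    have "H 1 = 2 - \<beta> + (2 - \<beta>) * real (2*n-1)" unfolding H_def using hn by (simp add: of_nat_diff)
    also have "... = (2 - \<beta>) * real (2*n)" using hn by (simp add: of_nat_diff algebra_simps)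
    finally show ?thesis using bet hn by (simp add: mult_neg_pos)
  qed
  have cont: "\<forall>x. 1 \<le> x \<and> x \<le> g \<longrightarrow> isCont H x" unfolding H_def by (auto intro!: continuous_intros)
  obtain c where c: "1 \<le> c" "c \<le> g" "H c = 0" using IVT[of H 1 0 g] H1 Hg gg cont by auto
  have c1: "c > 1" using c H1 by (cases "c = 1") auto
  have "D c = 0" using fact[of c] c by simp
  show ?thesis
  proof (intro conjI)
    show "\<gamma>\<^sub>1 * \<gamma>\<^sub>2 = 1" by (rule prod)
    show "\<beta> > 2" by (rule bet)
    show "\<forall>x::real. x^(2*n - 1) * (x - \<gamma>\<^sub>1) * (x - \<gamma>\<^sub>2) - (1 - \<gamma>\<^sub>1) * (1 - \<gamma>\<^sub>2)
       = (x - 1) * (x^(2*n) + (1 - \<beta>) * x^(2*n - 1) + (2 - \<beta>) * (\<Sum>i=0..2*n-2. x^i))"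
      by (rule allI, rule fact[unfolded D_def H_def])
    show "\<exists>x::real. x > 1 \<and> x^(2*n - 1) * (x - \<gamma>\<^sub>1) * (x - \<gamma>\<^sub>2) - (1 - \<gamma>\<^sub>1) * (1 - \<gamma>\<^sub>2) = 0"
      by (intro exI[of _ c] conjI c1 \<open>D c = 0\<close>[unfolded D_def])
  qed
qed

end
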